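(* The condition \[ r(v)r''(v)+r'(v)\le 1 \quad\text{for all } v\in\big(\overline p_{Q,c}(q_h),\overline p_{Q,c}(q_\ell)\big) \] holds for every choice of $0<q_\ell<q_h<\infty$ and $c$ with $0<c<q_\ell$ (where $Q=[q_\ell,q_h]$) if and only if $r(v)r''(v)+r'(v)\le 1$ for every $v\in(0,1)$ with $\psi(v)>0$.
   Context: Let $F$ be a probability distribution on $[0,1]$ with support $[0,1]$ admitting a twice continuously differentiable density $f:(0,1)\to\mathbb{R}_{>0}$. Define the inverse hazard rate $r(v)=(1-F(v))/f(v)$ and the virtual valuation $\psi(v)=v-r(v)$ on $(0,1)$, and assume $\psi'(v)>0$ whenever $\psi(v)>0$. Given $Q=[q_\ell,q_h]$ with $0<q_\ell<q_h<\infty$ and a cost $c$ with $0<c<q_\ell$, for $q\in Q$ let $p_{Q,c}(q)$ be the unique maximizer over $p\in\mathbb{R}$ of $(p-c)\big(1-F(p/q)\big)$ and $\overline p_{Q,c}(q)=p_{Q,c}(q)/q$. *)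

theory Defs
  imports "HOL-Analysis.Analysis"
begin

definition C2_on :: "real set \<Rightarrow> (real \<Rightarrow> real) \<Rightarrow> bool" where
  "C2_on S g \<longleftrightarrow>
     (\<forall>x\<in>S. g differentiable (at x)) \<and>
     (\<forall>x\<in>S. deriv g differentiable (at x)) \<and>
     continuous_on S (deriv (deriv g))"

definition inv_hazard :: "(real \<Rightarrow> real) \<Rightarrow> (real \<Rightarrow> real) \<Rightarrow> real \<Rightarrow> real" where
  "inv_hazard F f v = (1 - F v) / f v"

definition virt_val :: "(real \<Rightarrow> real) \<Rightarrow> (real \<Rightarrow> real) \<Rightarrow> real \<Rightarrow> real" where
  "virt_val F f v = v - inv_hazard F f v"

definition profit :: "(real \<Rightarrow> real) \<Rightarrow> real \<Rightarrow> real \<Rightarrow> real \<Rightarrow> real" where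
  "profit F c q p = (p - c) * (1 - F (p / q))"

definition opt_price :: "(real \<Rightarrow> real) \<Rightarrow> real \<Rightarrow> real \<Rightarrow> real" where
  "opt_price F c q = (THE p. \<forall>p'. profit F c q p' \<le> profit F c q p)"

definition opt_price_norm :: "(real \<Rightarrow> real) \<Rightarrow> real \<Rightarrow> real \<Rightarrow> real" where
  "opt_price_norm F c q = opt_price F c q / q"

end

theory Submission
  imports Defs
begin

lemma levelL:
  fixes g :: "real \<Rightarrow> real"
  assumes cont: "continuous_on {0<..<1} g"
    and der: "\<And>v. v \<in> {0<..<1} \<Longrightarrow> g v > 0 \<Longrightarrow> \<exists>l>0. (g has_real_derivative l) (at v)"
    and x0: "0 < x0" "x0 \<le> x" "x < 1" and a: "0 < a" "a \<le> g x0"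
  shows "a \<le> g x"
proof -
  define T where "T = {x0..x} \<inter> g -` {a..}"
  have "continuous_on {x0..x} g" using x0 by (intro continuous_on_subset[OF cont]) auto
  then have "closed T" unfolding T_def by (intro continuous_closed_preimage) auto
  moreover have "bounded T" unfolding T_def by (rule bounded_subset[of "{x0..x}"]) auto
  ultimately have "compact T" by (simp add: compact_eq_bounded_closed)
  moreover have "T \<noteq> {}" using x0 a unfolding T_def by auto
  ultimately obtain z where z: "z \<in> T" "\<And>t. t \<in> T \<Longrightarrow> t \<le> z"
    using compact_attains_sup by metis
  show ?thesis
  proof (cases "z = x")
    case True then show ?thesis using z unfolding T_def by auto
  next
    case False
    then have zx: "z < x" "x0 \<le> z" "a \<le> g z" using z unfolding T_def by auto
    then obtain l where l: "l > 0" "(g has_real_derivative l) (at z)"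
      using der[of z] x0 a by auto
    obtain d where d: "d > 0" "\<And>h. h > 0 \<Longrightarrow> h < d \<Longrightarrow> g z < g (z + h)"
      using DERIV_pos_inc_right[OF l(2) l(1)] by blast
    define h where "h = min (d/2) (x - z)"
    have h: "h > 0" "h < d" "z + h \<le> x" using d zx unfolding h_def by auto
    have "z + h \<in> T" using d(2)[OF h(1,2)] h zx unfolding T_def by auto
    then show ?thesis using z(2) h by fastforce
  qed
qed

lemma uniqL:
  fixes g :: "real \<Rightarrow> real"
  assumes cont: "continuous_on {0<..<1} g"
    and der: "\<And>v. v \<in> {0<..<1} \<Longrightarrow> g v > 0 \<Longrightarrow> \<exists>l>0. (g has_real_derivative l) (at v)"
    and v: "0 < v1" "v1 < 1" "0 < v2" "v2 < 1" "g v1 = g v2" "g v1 > 0"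
  shows "v1 = v2"
proof -
  have *: False if hx: "0 < x1" "x1 < x2" "x2 < 1" "g x1 = g x2" "g x1 > 0" for x1 x2
  proof -
    have "x1 \<in> {0<..<1}" using that by auto
    then obtain l where l: "l > 0" "(g has_real_derivative l) (at x1)"
      using der hx(5) by blast
    obtain d where d: "d > 0" "\<And>h. h > 0 \<Longrightarrow> h < d \<Longrightarrow> g x1 < g (x1 + h)"
      using DERIV_pos_inc_right[OF l(2) l(1)] by blast
    define h where "h = min (d/2) (x2 - x1)"
    have h: "h > 0" "h < d" "x1 + h \<le> x2" using d that unfolding h_def by auto
    have "g (x1 + h) \<le> g x2"
      by (rule levelL[OF cont der]) (use h d(2)[OF h(1,2)] hx in auto)
    then show False using d(2)[OF h(1,2)] that by auto
  qed
  show ?thesis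
    using *[of v1 v2] *[of v2 v1] v by (cases v1 v2 rule: linorder_cases) auto
qed


theorem lemma8:
  fixes F f :: "real \<Rightarrow> real"
  assumes F_cont: "continuous_on UNIV F"
    and F_below: "\<And>x. x \<le> 0 \<Longrightarrow> F x = 0"
    and F_above: "\<And>x. x \<ge> 1 \<Longrightarrow> F x = 1"
    and F_deriv: "\<And>v. v \<in> {0<..<1} \<Longrightarrow> (F has_real_derivative f v) (at v)"
    and f_pos: "\<And>v. v \<in> {0<..<1} \<Longrightarrow> f v > 0"
    and f_C2: "C2_on {0<..<1} f"
    and psi_mono: "\<And>v. v \<in> {0<..<1} \<Longrightarrow> virt_val F f v > 0 \<Longrightarrow>
                     deriv (virt_val F f) v > 0"
  shows "(\<forall>ql qh c. 0 < ql \<longrightarrow> ql < qh \<longrightarrow> 0 < c \<longrightarrow> c < ql \<longrightarrow>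
            (\<forall>v \<in> {opt_price_norm F c qh <..< opt_price_norm F c ql}.
               inv_hazard F f v * deriv (deriv (inv_hazard F f)) v
                 + deriv (inv_hazard F f) v \<le> 1))
         \<longleftrightarrow>
         (\<forall>v \<in> {0<..<1}. virt_val F f v > 0 \<longrightarrow>
               inv_hazard F f v * deriv (deriv (inv_hazard F f)) v
                 + deriv (inv_hazard F f) v \<le> 1)"
proof -
  define \<psi> where "\<psi> = virt_val F f"
  have psi_eq: "\<psi> v = v - (1 - F v) / f v" for v
    unfolding \<psi>_def virt_val_def inv_hazard_def by simp
  have F_inc: "F x < F y" if "0 \<le> x" "x < y" "y \<le> 1" for x y
  proof (rule DERIV_pos_imp_increasing_open[OF that(2)])
    show "\<exists>y. (F has_real_derivative y) (at t) \<and> 0 < y" if "x < t" "t < y" for t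
      using F_deriv[of t] f_pos[of t] that \<open>0 \<le> x\<close> \<open>y \<le> 1\<close> by auto
    show "continuous_on {x..y} F" using continuous_on_subset[OF F_cont] by blast
  qed
  have F_lt1: "F x < 1" if "x < 1" for x
  proof (cases "x \<le> 0")
    case True then show ?thesis using F_below by simp
  next
    case False then show ?thesis using F_inc[of x 1] F_above[of 1] that by simp
  qed
  have F_le1: "F x \<le> 1" for x
    using F_lt1[of x] F_above[of x] by (cases "x < 1") auto
  have f_diff: "f differentiable (at v)" if "v \<in> {0<..<1}" for v
    using f_C2 that unfolding C2_on_def by blast
  have F_diff: "F differentiable (at v)" if "v \<in> {0<..<1}" for v
    using F_deriv[OF that] real_differentiable_def by blast
  have psi_diff: "\<psi> differentiable (at v)" if "v \<in> {0<..<1}" for v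
  proof -
    have "\<psi> = (\<lambda>v. v - (1 - F v) / f v)" using psi_eq by auto
    then show ?thesis
      using f_diff[OF that] F_diff[OF that] f_pos[OF that]
      by (auto intro!: differentiable_diff differentiable_divide differentiable_const differentiable_ident)
  qed
  have cont: "continuous_on {0<..<1} \<psi>"
    using psi_diff by (intro continuous_at_imp_continuous_on) (auto intro: differentiable_imp_continuous_within)
  have der: "\<exists>l>0. (\<psi> has_real_derivative l) (at v)" if "v \<in> {0<..<1}" "\<psi> v > 0" for v
    using psi_mono[of v] that psi_diff[OF that(1)] DERIV_deriv_iff_real_differentiable
    unfolding \<psi>_def by blast
  have OPT: "opt_price_norm F c q \<in> {0<..<1} \<and> \<psi> (opt_price_norm F c q) = c / q"
    if cq: "0 < c" "c < q" for c q
  proof -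
    define P where "P = profit F c q"
    have P_eq: "P p = (p - c) * (1 - F (p / q))" for p unfolding P_def profit_def by simp
    have "continuous_on UNIV (\<lambda>p. (p - c) * (1 - F (p / q)))"
      using cq by (intro continuous_intros continuous_on_compose2[OF F_cont]) auto
    then have "continuous_on {c..q} P" using P_eq continuous_on_subset by (metis (no_types, lifting) ext top_greatest)
    then obtain ps where ps: "ps \<in> {c..q}" "\<And>y. y \<in> {c..q} \<Longrightarrow> P y \<le> P ps"
      using continuous_attains_sup[of "{c..q}" P] cq by auto
    have Pc: "P c = 0" using P_eq by simp
    have glob: "P p' \<le> P ps" for p'
    proof -
      consider "p' < c" | "p' \<in> {c..q}" | "p' > q" by force
      then show ?thesis
      proof cases
        case 1
        then have "P p' \<le> 0" using P_eq[of p'] F_le1[of "p'/q"] by (simp add: mult_nonpos_nonneg)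
        then show ?thesis using ps(2)[of c] Pc cq by auto
      next
        case 2 then show ?thesis using ps by auto
      next
        case 3
        then have "P p' = 0" using P_eq[of p'] F_above[of "p'/q"] cq by simp
        then show ?thesis using ps(2)[of c] Pc cq by auto
      qed
    qed
    have char: "p / q \<in> {0<..<1} \<and> \<psi> (p / q) = c / q" if pmax: "\<forall>p'. P p' \<le> P p" for p
    proof -
      define m where "m = (c + q) / 2"
      have "m / q < 1" using cq unfolding m_def by (simp add: field_simps)
      moreover have "m - c > 0" using cq unfolding m_def by simp
      ultimately have "P m > 0" using P_eq[of m] F_lt1[of "m/q"] by simp
      then have Pp: "P p > 0" using pmax by (meson less_le_trans)
      have pc: "c < p"
      proof (rule ccontr)
        assume "\<not> c < p"
        then have "P p \<le> 0" using P_eq[of p] F_le1[of "p/q"] by (simp add: mult_nonpos_nonneg)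
        then show False using Pp by simp
      qed
      have pq: "p < q"
      proof (rule ccontr)
        assume "\<not> p < q"
        then have "P p = 0" using P_eq[of p] F_above[of "p/q"] cq by simp
        then show False using Pp by simp
      qed
      define v where "v = p / q"
      have v: "v \<in> {0<..<1}" using pc pq cq unfolding v_def by auto
      have dF: "((\<lambda>p. F (p / q)) has_real_derivative f v * (1 / q)) (at p)"
      proof -
        have "((\<lambda>p. p / q) has_real_derivative 1 / q) (at p)"
          using cq by (auto intro!: derivative_eq_intros)
        from DERIV_chain2[where f=F and g="\<lambda>p. p / q", OF F_deriv[OF v, unfolded v_def] this]
        show ?thesis unfolding v_def by simp
      qed
      have "(P has_real_derivative (1 - F v) + (p - c) * (- (f v * (1 / q)))) (at p)"
        unfolding P_eq[abs_def] v_def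
        by (rule derivative_eq_intros dF[unfolded v_def] | simp)+
      then have "(1 - F v) + (p - c) * (- (f v * (1 / q))) = 0"
        by (rule DERIV_local_max[of _ _ _ 1]) (use pmax in auto)
      then have "1 - F v = (v - c / q) * f v" using cq unfolding v_def by (simp add: field_simps)
      then have "(\<psi> v - c / q) * f v = 0" using psi_eq[of v] f_pos[OF v] by (simp add: field_simps)
      then have "\<psi> v = c / q" using f_pos[OF v] by simp
      then show ?thesis using v unfolding v_def by simp
    qed
    have uniq: "p = ps" if "\<forall>p'. P p' \<le> P p" for p
    proof -
      have c1: "p / q \<in> {0<..<1}" "\<psi> (p / q) = c / q" using char[OF that] by auto
      have c2: "ps / q \<in> {0<..<1}" "\<psi> (ps / q) = c / q" using char[of ps] glob by auto
      have "p / q = ps / q"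
        by (rule uniqL[OF cont der]) (use c1 c2 cq in simp_all)
      then show ?thesis using cq by simp
    qed
    have "opt_price F c q = ps"
      unfolding opt_price_def P_def[symmetric]
      by (rule the_equality) (use glob uniq in auto)
    then show ?thesis using char[of ps] glob unfolding opt_price_norm_def by auto
  qed
  show ?thesis
  proof
    assume H: "\<forall>ql qh c. 0 < ql \<longrightarrow> ql < qh \<longrightarrow> 0 < c \<longrightarrow> c < ql \<longrightarrow>
            (\<forall>v \<in> {opt_price_norm F c qh <..< opt_price_norm F c ql}.
               inv_hazard F f v * deriv (deriv (inv_hazard F f)) v
                 + deriv (inv_hazard F f) v \<le> 1)"
    show "\<forall>v \<in> {0<..<1}. virt_val F f v > 0 \<longrightarrow>
               inv_hazard F f v * deriv (deriv (inv_hazard F f)) v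
                 + deriv (inv_hazard F f) v \<le> 1"
    proof (intro ballI impI)
      fix v :: real assume v: "v \<in> {0<..<1}" and pv: "virt_val F f v > 0"
      define b where "b = \<psi> v"
      have b0: "b > 0" using pv unfolding b_def \<psi>_def by simp
      have "(1 - F v) / f v \<ge> 0" using F_le1[of v] f_pos[OF v] by simp
      then have b1: "b < 1" using psi_eq[of v] v unfolding b_def by auto
      define ql where "ql = 2 / (b + 1)"
      define qh where "qh = 2 / b"
      have q: "0 < ql" "ql < qh" "(0::real) < 1" "1 < ql"
        using b0 b1 unfolding ql_def qh_def by (auto simp: field_simps)
      have "1 < qh" using q by linarith
      note O1 = OPT[OF q(3) this]
      have e1: "1 / qh = b / 2" unfolding qh_def by simp
      have Oh: "opt_price_norm F 1 qh \<in> {0<..<1}" "\<psi> (opt_price_norm F 1 qh) = b / 2"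
        using conjunct1[OF O1] trans[OF conjunct2[OF O1] e1] by blast+
      have e2: "1 / ql = (b + 1) / 2" unfolding ql_def by simp
      note O2 = OPT[OF q(3) q(4)]
      have Ol: "opt_price_norm F 1 ql \<in> {0<..<1}" "\<psi> (opt_price_norm F 1 ql) = (b + 1) / 2"
        using conjunct1[OF O2] trans[OF conjunct2[OF O2] e2] by blast+
      have "opt_price_norm F 1 qh < v"
      proof (rule ccontr)
        assume "\<not> opt_price_norm F 1 qh < v"
        have "b \<le> \<psi> (opt_price_norm F 1 qh)"
          by (rule levelL[OF cont der, of v]) (use v Oh b0 \<open>\<not> opt_price_norm F 1 qh < v\<close> in \<open>auto simp: b_def\<close>)
        then show False using Oh b0 by simp
      qed
      moreover have "v < opt_price_norm F 1 ql"
      proof (rule ccontr)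
        assume "\<not> v < opt_price_norm F 1 ql"
        have "(b + 1) / 2 \<le> \<psi> v"
          by (rule levelL[OF cont der, of "opt_price_norm F 1 ql"]) (use v Ol b0 \<open>\<not> v < opt_price_norm F 1 ql\<close> in auto)
        then show False using b1 unfolding b_def by simp
      qed
      ultimately have "v \<in> {opt_price_norm F 1 qh <..< opt_price_norm F 1 ql}" by simp
      from H[rule_format, OF q(1) q(2) q(3) q(4) this]
      show "inv_hazard F f v * deriv (deriv (inv_hazard F f)) v
                 + deriv (inv_hazard F f) v \<le> 1" .
    qed
  next
    assume H: "\<forall>v \<in> {0<..<1}. virt_val F f v > 0 \<longrightarrow>
               inv_hazard F f v * deriv (deriv (inv_hazard F f)) v
                 + deriv (inv_hazard F f) v \<le> 1"
    show "\<forall>ql qh c. 0 < ql \<longrightarrow> ql < qh \<longrightarrow> 0 < c \<longrightarrow> c < ql \<longrightarrow>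
            (\<forall>v \<in> {opt_price_norm F c qh <..< opt_price_norm F c ql}.
               inv_hazard F f v * deriv (deriv (inv_hazard F f)) v
                 + deriv (inv_hazard F f) v \<le> 1)"
    proof (intro allI impI ballI)
      fix ql qh c v :: real
      assume q: "0 < ql" "ql < qh" "0 < c" "c < ql"
        and v: "v \<in> {opt_price_norm F c qh <..< opt_price_norm F c ql}"
      have Oh: "opt_price_norm F c qh \<in> {0<..<1}" "\<psi> (opt_price_norm F c qh) = c / qh"
        using OPT[of c qh] q by auto
      have Ol: "opt_price_norm F c ql \<in> {0<..<1}"
        using OPT[of c ql] q by auto
      have v01: "v \<in> {0<..<1}" using v Oh Ol by auto
      have "c / qh \<le> \<psi> v"
        by (rule levelL[OF cont der, of "opt_price_norm F c qh"]) (use v v01 Oh q in auto)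
      then have "virt_val F f v > 0" using q unfolding \<psi>_def by (smt (verit) divide_pos_pos)
      then show "inv_hazard F f v * deriv (deriv (inv_hazard F f)) v
                 + deriv (inv_hazard F f) v \<le> 1" using H v01 by blast
    qed
  qed
qed

end
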